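(* Let $|B(\vec\lambda,\Phi)\rangle$ be a balanced state with $\vec\lambda=(\lambda_1,\lambda_2,\lambda_3)$, and fix a context $(A,B,C)$ of equatorial measurement angles in $[0,\pi)$ on qubits $1,2,3$. Then: 1. For a given $c\in\{0,1\}$, if one of the events $(A,B,C)\to(0,0,c)$, $(A,B,C)\to(1,1,c)$ is impossible, then the other is impossible if and only if $\delta(\lambda_1,A)\equiv\delta(\lambda_2,B)\equiv\pi$. 2. For a given $c\in\{0,1\}$, if one of the events $(A,B,C)\to(0,1,c)$, $(A,B,C)\to(1,0,c)$ is impossible, then the other is impossible if and only if $\delta(\lambda_1,A)\equiv\delta(\lambda_2,B)$. The analogous statements hold for any other pair of qubits (with the outcome of the remaining qubit fixed and the corresponding $\lambda_i$ and angles).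
   Context: $\equiv$ denotes equality modulo $2\pi$. For $\lambda\in[0,\frac{\pi}{2})$ let $|v_\lambda\rangle=\cos\frac{\lambda}{2}|0\rangle+\sin\frac{\lambda}{2}|1\rangle$, $|w_\lambda\rangle=\sin\frac{\lambda}{2}|0\rangle+\cos\frac{\lambda}{2}|1\rangle$. A balanced state is $|B(\vec\lambda,\Phi)\rangle=\frac{1}{\sqrt2}(|v_{\lambda_1}\rangle|v_{\lambda_2}\rangle|v_{\lambda_3}\rangle+e^{i\Phi}|w_{\lambda_1}\rangle|w_{\lambda_2}\rangle|w_{\lambda_3}\rangle)$ with $\lambda_i\in[0,\frac{\pi}{2})$, $\Phi\in[0,2\pi)$. The equatorial measurement with angle $\varphi$ is $E_\varphi=\cos\varphi X+\sin\varphi Y$, with $+1$ eigenvector $|\varphi\rangle=\frac{1}{\sqrt2}(|0\rangle+e^{i\varphi}|1\rangle)$ and $-1$ eigenvector $|\varphi+\pi\rangle$; outcomes $+1,-1$ are relabelled $0,1$. The event $(A,B,C)\to(a,b,c)$ is impossible if $(\langle A+a\pi|\otimes\langle B+b\pi|\otimes\langle C+c\pi|)|B(\vec\lambda,\Phi)\rangle=0$. Define modulo $2\pi$: $\beta(\lambda,\varphi)=\varphi-2\arctan\left(\frac{\cos\frac{\lambda}{2}\sin\varphi}{\sin\frac{\lambda}{2}+\cos\frac{\lambda}{2}\cos\varphi}\right)$ and $\delta(\lambda,\varphi)=\beta(\lambda,\varphi+\pi)-\beta(\lambda,\varphi)\equiv\pi-2\arctan(\sin\varphi\tan\lambda)$.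 *)

theory Defs
  imports Complex_Main
begin

definition cong2pi :: "real \<Rightarrow> real \<Rightarrow> bool" where
  "cong2pi x y \<longleftrightarrow> (\<exists>k::int. x - y = 2 * pi * of_int k)"

text \<open>Qubit states as coefficient pairs (amplitude of |0>, amplitude of |1>).\<close>
definition vstate :: "real \<Rightarrow> complex \<times> complex" where
  "vstate l = (complex_of_real (cos (l/2)), complex_of_real (sin (l/2)))"

definition wstate :: "real \<Rightarrow> complex \<times> complex" where
  "wstate l = (complex_of_real (sin (l/2)), complex_of_real (cos (l/2)))"

definition eqstate :: "real \<Rightarrow> complex \<times> complex" where
  "eqstate phi = (complex_of_real (1 / sqrt 2), cis phi / complex_of_real (sqrt 2))"

definition braket :: "complex \<times> complex \<Rightarrow> complex \<times> complex \<Rightarrow> complex" where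
  "braket u x = cnj (fst u) * fst x + cnj (snd u) * snd x"

text \<open>Amplitude (<A+a pi| (x) <B+b pi| (x) <C+c pi|) |B(lambda,Phi)>, qubits indexed 0,1,2;
  lam q = lambda of qubit q, ang q = measurement angle of qubit q, out q = outcome in {0,1}.\<close>
definition amplitude :: "(nat \<Rightarrow> real) \<Rightarrow> real \<Rightarrow> (nat \<Rightarrow> real) \<Rightarrow> (nat \<Rightarrow> nat) \<Rightarrow> complex" where
  "amplitude lam Phi ang out =
     (1 / complex_of_real (sqrt 2)) *
     ((\<Prod>q<3. braket (eqstate (ang q + real (out q) * pi)) (vstate (lam q)))
      + cis Phi * (\<Prod>q<3. braket (eqstate (ang q + real (out q) * pi)) (wstate (lam q))))"

definition impossible :: "(nat \<Rightarrow> real) \<Rightarrow> real \<Rightarrow> (nat \<Rightarrow> real) \<Rightarrow> (nat \<Rightarrow> nat) \<Rightarrow> bool" where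
  "impossible lam Phi ang out \<longleftrightarrow> amplitude lam Phi ang out = 0"

text \<open>delta(lambda,phi) = beta(lambda,phi+pi) - beta(lambda,phi), in the closed form given
  in the paper (modulo 2 pi): pi - 2 arctan(sin phi tan lambda).\<close>
definition delta :: "real \<Rightarrow> real \<Rightarrow> real" where
  "delta l phi = pi - 2 * arctan (sin phi * tan l)"

definition outc :: "nat \<Rightarrow> nat \<Rightarrow> nat \<Rightarrow> nat \<Rightarrow> nat \<Rightarrow> nat \<Rightarrow> nat" where
  "outc i j a b c = (\<lambda>q. if q = i then a else if q = j then b else c)"

end

theory Submission
  imports Defs
begin


lemma cs_ineq:
  assumes "0 \<le> l" "l < pi/2"
  shows "sin (l/2) < cos (l/2) \<and> 0 \<le> sin (l/2) \<and> 0 < cos (l/2)"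
proof -
  have c: "0 < cos (l/2)" using assms by (intro cos_gt_zero_pi) auto
  have s: "0 \<le> sin (l/2)" using assms by (intro sin_ge_zero) auto
  have "cos l = cos (l/2)^2 - sin (l/2)^2" using cos_double[of "l/2"] by simp
  moreover have "0 < cos l" using assms by (intro cos_gt_zero_pi) auto
  ultimately have "sin (l/2)^2 < cos (l/2)^2" by simp
  hence "sin (l/2) < cos (l/2)" using c s by (smt (verit) power_mono)
  thus ?thesis using c s by simp
qed

lemma braket_eq:
  "braket (eqstate phi) (complex_of_real p, complex_of_real q) =
     (complex_of_real p + cnj (cis phi) * complex_of_real q) / complex_of_real (sqrt 2)"
  unfolding braket_def eqstate_def by (simp add: field_simps)

lemma poly_id:
  fixes c s C S :: real
  assumes "C^2 + S^2 = 1"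
  shows "(s - (C - \<i>*S)*c) * (c + (C - \<i>*S)*s) * ((c^2 - s^2) + \<i> * (2*c*s*S))
       = - ((c^2 - s^2) - \<i> * (2*c*s*S)) * (c - (C - \<i>*S)*s) * (s + (C - \<i>*S)*c)"
proof -
  have "C^2 = 1 - S^2" using assms by simp
  show ?thesis by (simp add: complex_eq_iff algebra_simps power2_eq_square) (use assms in algebra)?
qed



definition fa :: "real \<Rightarrow> real \<Rightarrow> nat \<Rightarrow> complex" where
  "fa l phi k = braket (eqstate (phi + real k * pi)) (vstate l)"
definition fb :: "real \<Rightarrow> real \<Rightarrow> nat \<Rightarrow> complex" where
  "fb l phi k = braket (eqstate (phi + real k * pi)) (wstate l)"

lemma w_id:
  fixes u :: real
  shows "cis (pi - 2 * arctan u) * (1 + \<i> * u) = - (1 - \<i> * u)"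
proof -
  define t where "t = arctan u"
  have ct: "cos t > 0" unfolding t_def by (simp add: cos_arctan add_pos_nonneg)
  have u: "u = sin t / cos t" unfolding t_def by (metis tan_arctan tan_def)
  have e1: "cis t = complex_of_real (cos t) * (1 + \<i> * u)"
    using ct by (simp add: u complex_eq_iff field_simps)
  have e2: "cis (-t) = complex_of_real (cos t) * (1 - \<i> * u)"
    using ct by (simp add: u complex_eq_iff field_simps)
  have "cis (-2*t) * cis t = cis (-t)" by (simp add: cis_mult)
  hence "complex_of_real (cos t) * (cis (-2*t) * (1 + \<i> * u)) = complex_of_real (cos t) * (1 - \<i> * u)"
    using e1 e2 by (simp add: algebra_simps)
  hence h: "cis (-2*t) * (1 + \<i> * u) = 1 - \<i> * u" using ct by simp
  have "cis (pi - 2 * t) = - cis (-2*t)" by (simp add: minus_cis)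
  thus ?thesis using h unfolding t_def[symmetric] by simp
qed

lemma aux_sub:
  fixes X K K' Y Z w :: complex
  assumes "X*K = -K'*Y*Z" "w*K = -K'"
  shows "X*K = (w*Y*Z)*K"
proof -
  have "X*K = (w*K)*Y*Z" using assms by simp
  thus ?thesis by (simp add: ac_simps)
qed

lemma qubit:
  assumes "0 \<le> l" "l < pi/2"
  shows "fa l phi 0 \<noteq> 0 \<and> fa l phi 1 \<noteq> 0 \<and> fb l phi 0 \<noteq> 0 \<and> fb l phi 1 \<noteq> 0 \<and>
         fb l phi 1 * fa l phi 0 = cis (delta l phi) * fa l phi 1 * fb l phi 0"
proof -
  define c where "c = cos (l/2)"
  define s where "s = sin (l/2)"
  define C where "C = cos phi"
  define S where "S = sin phi"
  have cs: "s < c" "0 \<le> s" "0 < c" using cs_ineq[OF assms] by (auto simp: c_def s_def)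
  have CS: "C^2 + S^2 = 1" by (simp add: C_def S_def)
  have Cb: "-1 \<le> C" "C \<le> 1" by (auto simp: C_def)
  have cc: "cnj (cis phi) = complex_of_real C - \<i> * complex_of_real S"
    by (simp add: complex_eq_iff C_def S_def)
  have cp: "cis (pi + phi) = - cis phi" by (simp add: minus_cis add.commute)
  define r where "r = complex_of_real (sqrt 2)"
  have r0: "r \<noteq> 0" by (simp add: r_def)
  have a0: "fa l phi 0 = (c + (C - \<i>*S)*s) / r"
    by (simp add: fa_def vstate_def braket_eq cc r_def c_def s_def)
  have a1: "fa l phi 1 = (c - (C - \<i>*S)*s) / r"
    by (simp add: fa_def vstate_def braket_eq cc cp r_def c_def s_def algebra_simps)
  have b0: "fb l phi 0 = (s + (C - \<i>*S)*c) / r"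
    by (simp add: fb_def wstate_def braket_eq cc r_def c_def s_def)
  have b1: "fb l phi 1 = (s - (C - \<i>*S)*c) / r"
    by (simp add: fb_def wstate_def braket_eq cc cp r_def c_def s_def algebra_simps)
  have na0: "c + (C - \<i>*S)*s \<noteq> 0"
  proof
    assume "c + (C - \<i>*S)*s = 0"
    hence "c + C*s = 0" by (simp add: complex_eq_iff)
    moreover have "-s \<le> C*s" using mult_right_mono[OF Cb(1) cs(2)] by simp
    ultimately show False using cs by simp
  qed
  have na1: "c - (C - \<i>*S)*s \<noteq> 0"
  proof
    assume "c - (C - \<i>*S)*s = 0"
    hence "c - C*s = 0" by (simp add: complex_eq_iff)
    moreover have "C*s \<le> s" using mult_right_mono[OF Cb(2) cs(2)] by simp
    ultimately show False using cs by simp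
  qed
  have nb0: "s + (C - \<i>*S)*c \<noteq> 0"
  proof
    assume "s + (C - \<i>*S)*c = 0"
    hence "s + C*c = 0" "S * c = 0" by (simp_all add: complex_eq_iff)
    hence "S = 0" using cs by simp
    hence "C = 1 \<or> C = -1" using CS by (simp add: power2_eq_1_iff)
    thus False using \<open>s + C*c = 0\<close> cs by auto
  qed
  have nb1: "s - (C - \<i>*S)*c \<noteq> 0"
  proof
    assume "s - (C - \<i>*S)*c = 0"
    hence "s - C*c = 0" "S * c = 0" by (simp_all add: complex_eq_iff)
    hence "S = 0" using cs by simp
    hence "C = 1 \<or> C = -1" using CS by (simp add: power2_eq_1_iff)
    thus False using \<open>s - C*c = 0\<close> cs by auto
  qed
  have cl: "cos l = c^2 - s^2" using cos_double[of "l/2"] by (simp add: c_def s_def)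
  have sl: "sin l = 2*c*s" using sin_double[of "l/2"] by (simp add: c_def s_def)
  have clp: "cos l > 0" using assms by (intro cos_gt_zero_pi) auto
  define u where "u = sin phi * tan l"
  have K: "complex_of_real (cos l) * (1 + \<i> * u) = (c^2 - s^2) + \<i> * (2*c*s*S)"
    using clp by (simp add: u_def tan_def complex_eq_iff cl sl S_def field_simps)
  have K': "complex_of_real (cos l) * (1 - \<i> * u) = (c^2 - s^2) - \<i> * (2*c*s*S)"
    using clp by (simp add: u_def tan_def complex_eq_iff cl sl S_def field_simps)
  have Knz: "(c^2 - s^2) + \<i> * (2*c*s*S) \<noteq> (0::complex)"
    using clp cl by (simp add: complex_eq_iff)
  have wd: "cis (delta l phi) = cis (pi - 2 * arctan u)" by (simp add: delta_def u_def)
  have "cis (delta l phi) * ((c^2 - s^2) + \<i> * (2*c*s*S)) = - ((c^2 - s^2) - \<i> * (2*c*s*S))"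
  proof -
    have "cis (pi - 2 * arctan u) * (complex_of_real (cos l) * (1 + \<i> * u))
        = complex_of_real (cos l) * (cis (pi - 2 * arctan u) * (1 + \<i> * u))" by (simp only: ac_simps)
    also have "\<dots> = - (complex_of_real (cos l) * (1 - \<i> * u))" by (simp only: w_id) (simp add: algebra_simps)
    finally show ?thesis unfolding wd K[symmetric] K'[symmetric] .
  qed
  hence "(s - (C - \<i>*S)*c) * (c + (C - \<i>*S)*s) * ((c^2 - s^2) + \<i> * (2*c*s*S))
       = (cis (delta l phi) * (c - (C - \<i>*S)*s) * (s + (C - \<i>*S)*c)) * ((c^2 - s^2) + \<i> * (2*c*s*S))"
    by (rule aux_sub[OF poly_id[OF CS, of s c]])
  hence "(s - (C - \<i>*S)*c) * (c + (C - \<i>*S)*s) = cis (delta l phi) * (c - (C - \<i>*S)*s) * (s + (C - \<i>*S)*c)"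
    using Knz by simp
  hence "fb l phi 1 * fa l phi 0 = cis (delta l phi) * fa l phi 1 * fb l phi 0"
    unfolding a0 a1 b0 b1 by (simp add: field_simps)
  moreover have "fa l phi 0 \<noteq> 0" unfolding a0 using na0 r0 by simp
  moreover have "fa l phi 1 \<noteq> 0" unfolding a1 using na1 r0 by simp
  moreover have "fb l phi 0 \<noteq> 0" unfolding b0 using nb0 r0 by simp
  moreover have "fb l phi 1 \<noteq> 0" unfolding b1 using nb1 r0 by simp
  ultimately show ?thesis by blast
qed



lemma L1:
  fixes P Q P' Q' x y e :: complex
  assumes "P*x + e*(Q*y) = 0" "P \<noteq> 0" "e \<noteq> 0" "y \<noteq> 0"
  shows "P'*x + e*(Q'*y) = 0 \<longleftrightarrow> Q'*P = P'*Q"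
proof -
  have x: "x = - e*Q*y / P" using assms(1,2) by (simp add: field_simps add_eq_0_iff)
  have "P'*x + e*(Q'*y) = (e*y) * (Q'*P - P'*Q) / P" unfolding x using assms(2)
    by (simp add: field_simps)
  thus ?thesis using assms(2-4) by simp
qed

lemma L2:
  fixes A B W :: complex
  assumes "A = W * B" "B \<noteq> 0"
  shows "A = B \<longleftrightarrow> W = 1"
  using assms by auto

lemma delta_range:
  assumes "0 \<le> l" "l < pi/2" "0 \<le> phi" "phi < pi"
  shows "0 < delta l phi \<and> delta l phi \<le> pi"
proof -
  have "0 \<le> sin phi" using assms by (intro sin_ge_zero) auto
  moreover have "0 \<le> tan l" using assms tan_gt_zero[of l] by (cases "l = 0") auto
  ultimately have u: "0 \<le> sin phi * tan l" by simp
  have "arctan (sin phi * tan l) < pi/2" by (rule arctan_ubound)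
  moreover have "0 \<le> arctan (sin phi * tan l)" using u by simp
  ultimately show ?thesis by (simp add: delta_def)
qed

lemma cis_eq_cong: "cis a = cis b \<longleftrightarrow> cong2pi a b"
proof
  assume "cis a = cis b"
  hence "sin a = sin b \<and> cos a = cos b" by (simp add: complex_eq_iff)
  then obtain n :: int where "a = b + 2*pi*n" using sin_cos_eq_iff by blast
  thus "cong2pi a b" unfolding cong2pi_def by (intro exI[of _ n]) simp
next
  assume "cong2pi a b"
  then obtain k :: int where k: "a - b = 2*pi*k" unfolding cong2pi_def by blast
  hence "a = b + 2*pi*k" by simp
  hence "sin a = sin b \<and> cos a = cos b" using sin_cos_eq_iff by blast
  thus "cis a = cis b" by (simp add: complex_eq_iff)
qed

lemma cong_pi:
  assumes "0 < d" "d \<le> pi"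
  shows "cong2pi d pi \<longleftrightarrow> d = pi"
proof
  assume "cong2pi d pi"
  then obtain k :: int where k: "d - pi = 2*pi*k" unfolding cong2pi_def by blast
  have "2*pi*k > -pi" "2*pi*k \<le> 0" using k assms by linarith+
  hence "pi * (2*k+1) > 0" "pi * k \<le> 0" by (simp_all add: algebra_simps)
  hence "2*k+1 > 0" "k \<le> 0" using pi_gt_zero by (simp_all add: zero_less_mult_iff mult_le_0_iff)
  hence "k = 0" by linarith
  thus "d = pi" using k by simp
qed (simp add: cong2pi_def)

lemma sum_one:
  assumes "0 < d1" "d1 \<le> pi" "0 < d2" "d2 \<le> pi"
  shows "cis d1 * cis d2 = 1 \<longleftrightarrow> d1 = pi \<and> d2 = pi"
proof
  assume "cis d1 * cis d2 = 1"
  hence "cos (d1 + d2) = 1" by (simp add: cis_mult complex_eq_iff)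
  then obtain n :: int where n: "d1 + d2 = of_int n*2*pi" using cos_one_2pi_int by blast
  have "0 < n*2*pi" "n*2*pi \<le> 2*pi" using n assms by linarith+
  hence "0 < n" "n \<le> 1" using pi_gt_zero by (auto simp: zero_less_mult_iff)
  hence "n = 1" by linarith
  thus "d1 = pi \<and> d2 = pi" using n assms by simp
qed (simp add: cis_mult)



lemma amp_form:
  fixes i j k :: nat
  assumes "i < 3" "j < 3" "i \<noteq> j" "k = 3 - i - j"
  shows "impossible lam Phi ang (outc i j a b c) \<longleftrightarrow>
    (fa (lam i) (ang i) a * fa (lam j) (ang j) b) * fa (lam k) (ang k) c +
    cis Phi * ((fb (lam i) (ang i) a * fb (lam j) (ang j) b) * fb (lam k) (ang k) c) = 0"
proof -
  have k: "k < 3" "k \<noteq> i" "k \<noteq> j" using assms by arith+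
  have U: "{..<3::nat} = {i, j, k}" using assms by (auto; arith)
  have P: "(\<Prod>q<3. g q) = g i * g j * g k" for g :: "nat \<Rightarrow> complex"
    unfolding U using assms k by simp
  have o: "outc i j a b c i = a" "outc i j a b c j = b" "outc i j a b c k = c"
    using assms k by (auto simp: outc_def)
  show ?thesis
    unfolding impossible_def amplitude_def
    by (simp add: P o fa_def[symmetric] fb_def[symmetric] mult.assoc)
qed

lemma L3:
  fixes Ai0 Ai1 Bi0 Bi1 Aj0 Aj1 Bj0 Bj1 wi wj :: complex
  assumes hi: "Bi1*Ai0 = wi*Ai1*Bi0" and hj: "Bj1*Aj0 = wj*Aj1*Bj0"
    and nz: "Ai0 \<noteq> 0" "Ai1 \<noteq> 0" "Bi0 \<noteq> 0" "Bi1 \<noteq> 0"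
            "Aj0 \<noteq> 0" "Aj1 \<noteq> 0" "Bj0 \<noteq> 0" "Bj1 \<noteq> 0"
  shows "(Bi1*Bj1)*(Ai0*Aj0) = (Ai1*Aj1)*(Bi0*Bj0) \<longleftrightarrow> wi*wj = 1"
    and "(Bi0*Bj0)*(Ai1*Aj1) = (Ai0*Aj0)*(Bi1*Bj1) \<longleftrightarrow> wi*wj = 1"
    and "(Bi1*Bj0)*(Ai0*Aj1) = (Ai1*Aj0)*(Bi0*Bj1) \<longleftrightarrow> wi = wj"
    and "(Bi0*Bj1)*(Ai1*Aj0) = (Ai0*Aj1)*(Bi1*Bj0) \<longleftrightarrow> wi = wj"
proof -
  have e1: "(Bi1*Bj1)*(Ai0*Aj0) = (wi*wj) * ((Ai1*Aj1)*(Bi0*Bj0))"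
  proof -
    have "(Bi1*Bj1)*(Ai0*Aj0) = (Bi1*Ai0)*(Bj1*Aj0)" by (simp only: ac_simps)
    also have "\<dots> = (wi*wj) * ((Ai1*Aj1)*(Bi0*Bj0))" unfolding hi hj by (simp only: ac_simps)
    finally show ?thesis .
  qed
  have n1: "(Ai1*Aj1)*(Bi0*Bj0) \<noteq> 0" using nz by simp
  show g1: "(Bi1*Bj1)*(Ai0*Aj0) = (Ai1*Aj1)*(Bi0*Bj0) \<longleftrightarrow> wi*wj = 1"
    using L2[OF e1 n1] .
  show "(Bi0*Bj0)*(Ai1*Aj1) = (Ai0*Aj0)*(Bi1*Bj1) \<longleftrightarrow> wi*wj = 1"
    unfolding g1[symmetric] by (simp only: ac_simps eq_commute)
  define N where "N = Ai1*Bi0*Bj0*Aj1*Aj0"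
  have N0: "N \<noteq> 0" using nz by (simp add: N_def)
  have l: "((Bi1*Bj0)*(Ai0*Aj1)) * Aj0 = wi * N"
  proof -
    have "((Bi1*Bj0)*(Ai0*Aj1)) * Aj0 = (Bi1*Ai0)*(Bj0*Aj1*Aj0)" by (simp only: ac_simps)
    also have "\<dots> = wi * N" unfolding hi N_def by (simp only: ac_simps)
    finally show ?thesis .
  qed
  have r: "((Ai1*Aj0)*(Bi0*Bj1)) * Aj0 = wj * N"
  proof -
    have "((Ai1*Aj0)*(Bi0*Bj1)) * Aj0 = (Bj1*Aj0)*(Ai1*Aj0*Bi0)" by (simp only: ac_simps)
    also have "\<dots> = wj * N" unfolding hj N_def by (simp only: ac_simps)
    finally show ?thesis .
  qed
  have g3: "(Bi1*Bj0)*(Ai0*Aj1) = (Ai1*Aj0)*(Bi0*Bj1) \<longleftrightarrow> wi = wj"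
  proof -
    have "(Bi1*Bj0)*(Ai0*Aj1) = (Ai1*Aj0)*(Bi0*Bj1) \<longleftrightarrow>
          ((Bi1*Bj0)*(Ai0*Aj1)) * Aj0 = ((Ai1*Aj0)*(Bi0*Bj1)) * Aj0"
      using nz by simp
    also have "\<dots> \<longleftrightarrow> wi * N = wj * N" unfolding l r ..
    also have "\<dots> \<longleftrightarrow> wi = wj" using N0 by simp
    finally show ?thesis .
  qed
  show g3': "(Bi1*Bj0)*(Ai0*Aj1) = (Ai1*Aj0)*(Bi0*Bj1) \<longleftrightarrow> wi = wj" by (rule g3)
  show "(Bi0*Bj1)*(Ai1*Aj0) = (Ai0*Aj1)*(Bi1*Bj0) \<longleftrightarrow> wi = wj"
    unfolding g3[symmetric] by (simp only: ac_simps eq_commute)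
qed



theorem lemma8:
  fixes lam ang :: "nat \<Rightarrow> real" and Phi :: real
  assumes "\<forall>q<3. 0 \<le> lam q \<and> lam q < pi / 2"
    and "\<forall>q<3. 0 \<le> ang q \<and> ang q < pi"
    and "0 \<le> Phi" and "Phi < 2 * pi"
  shows "\<forall>i j c. i < 3 \<and> j < 3 \<and> i \<noteq> j \<and> c \<in> {0, 1} \<longrightarrow>
     ((impossible lam Phi ang (outc i j 0 0 c) \<longrightarrow>
         (impossible lam Phi ang (outc i j 1 1 c) \<longleftrightarrow>
            cong2pi (delta (lam i) (ang i)) pi \<and> cong2pi (delta (lam j) (ang j)) pi)) \<and>
      (impossible lam Phi ang (outc i j 1 1 c) \<longrightarrow>
         (impossible lam Phi ang (outc i j 0 0 c) \<longleftrightarrow>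
            cong2pi (delta (lam i) (ang i)) pi \<and> cong2pi (delta (lam j) (ang j)) pi)) \<and>
      (impossible lam Phi ang (outc i j 0 1 c) \<longrightarrow>
         (impossible lam Phi ang (outc i j 1 0 c) \<longleftrightarrow>
            cong2pi (delta (lam i) (ang i)) (delta (lam j) (ang j)))) \<and>
      (impossible lam Phi ang (outc i j 1 0 c) \<longrightarrow>
         (impossible lam Phi ang (outc i j 0 1 c) \<longleftrightarrow>
            cong2pi (delta (lam i) (ang i)) (delta (lam j) (ang j)))))"
proof (intro allI impI)
  fix i j :: nat and c :: nat
  assume H: "i < 3 \<and> j < 3 \<and> i \<noteq> j \<and> c \<in> {0, 1}"
  hence i: "i < 3" and j: "j < 3" and ij: "i \<noteq> j" and c: "c = 0 \<or> c = 1" by auto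
  define k where "k = 3 - i - j"
  have k: "k < 3" unfolding k_def using i j ij by arith
  define e where "e = cis Phi"
  have e0: "e \<noteq> 0" by (simp add: e_def)
  define Ai0 where "Ai0 = fa (lam i) (ang i) 0"
  define Ai1 where "Ai1 = fa (lam i) (ang i) 1"
  define Bi0 where "Bi0 = fb (lam i) (ang i) 0"
  define Bi1 where "Bi1 = fb (lam i) (ang i) 1"
  define Aj0 where "Aj0 = fa (lam j) (ang j) 0"
  define Aj1 where "Aj1 = fa (lam j) (ang j) 1"
  define Bj0 where "Bj0 = fb (lam j) (ang j) 0"
  define Bj1 where "Bj1 = fb (lam j) (ang j) 1"
  define X where "X = fa (lam k) (ang k) c"
  define Y where "Y = fb (lam k) (ang k) c"
  define di where "di = delta (lam i) (ang i)"
  define dj where "dj = delta (lam j) (ang j)"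
  have qi: "Ai0 \<noteq> 0 \<and> Ai1 \<noteq> 0 \<and> Bi0 \<noteq> 0 \<and> Bi1 \<noteq> 0 \<and> Bi1 * Ai0 = cis di * Ai1 * Bi0"
    unfolding Ai0_def Ai1_def Bi0_def Bi1_def di_def using qubit assms(1) i by blast
  have qj: "Aj0 \<noteq> 0 \<and> Aj1 \<noteq> 0 \<and> Bj0 \<noteq> 0 \<and> Bj1 \<noteq> 0 \<and> Bj1 * Aj0 = cis dj * Aj1 * Bj0"
    unfolding Aj0_def Aj1_def Bj0_def Bj1_def dj_def using qubit assms(1) j by blast
  have qk: "X \<noteq> 0 \<and> Y \<noteq> 0"
    using qubit[of "lam k" "ang k"] assms(1) k c unfolding X_def Y_def by auto
  have ri: "0 < di \<and> di \<le> pi" unfolding di_def using delta_range assms(1,2) i by blast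
  have rj: "0 < dj \<and> dj \<le> pi" unfolding dj_def using delta_range assms(1,2) j by blast
  have E: "impossible lam Phi ang (outc i j a b c) \<longleftrightarrow>
    (fa (lam i) (ang i) a * fa (lam j) (ang j) b) * X +
    e * ((fb (lam i) (ang i) a * fb (lam j) (ang j) b) * Y) = 0" for a b
    unfolding X_def Y_def e_def by (rule amp_form[OF i j ij k_def])
  have E00: "impossible lam Phi ang (outc i j 0 0 c) \<longleftrightarrow> (Ai0*Aj0)*X + e*((Bi0*Bj0)*Y) = 0"
    unfolding E Ai0_def Aj0_def Bi0_def Bj0_def ..
  have E11: "impossible lam Phi ang (outc i j 1 1 c) \<longleftrightarrow> (Ai1*Aj1)*X + e*((Bi1*Bj1)*Y) = 0"
    unfolding E Ai1_def Aj1_def Bi1_def Bj1_def ..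
  have E01: "impossible lam Phi ang (outc i j 0 1 c) \<longleftrightarrow> (Ai0*Aj1)*X + e*((Bi0*Bj1)*Y) = 0"
    unfolding E Ai0_def Aj1_def Bi0_def Bj1_def ..
  have E10: "impossible lam Phi ang (outc i j 1 0 c) \<longleftrightarrow> (Ai1*Aj0)*X + e*((Bi1*Bj0)*Y) = 0"
    unfolding E Ai1_def Aj0_def Bi1_def Bj0_def ..
  note LL = L3[of Bi1 Ai0 "cis di" Ai1 Bi0 Bj1 Aj0 "cis dj" Aj1 Bj0]
  have W1: "cis di * cis dj = 1 \<longleftrightarrow> cong2pi di pi \<and> cong2pi dj pi"
    using sum_one[of di dj] cong_pi[of di] cong_pi[of dj] ri rj by simp
  have W2: "cis di = cis dj \<longleftrightarrow> cong2pi di dj" by (rule cis_eq_cong)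
  have nzP: "Ai0*Aj0 \<noteq> 0" "Ai1*Aj1 \<noteq> 0" "Ai0*Aj1 \<noteq> 0" "Ai1*Aj0 \<noteq> 0"
    using qi qj by auto
  show "((impossible lam Phi ang (outc i j 0 0 c) \<longrightarrow>
         (impossible lam Phi ang (outc i j 1 1 c) \<longleftrightarrow>
            cong2pi (delta (lam i) (ang i)) pi \<and> cong2pi (delta (lam j) (ang j)) pi)) \<and>
      (impossible lam Phi ang (outc i j 1 1 c) \<longrightarrow>
         (impossible lam Phi ang (outc i j 0 0 c) \<longleftrightarrow>
            cong2pi (delta (lam i) (ang i)) pi \<and> cong2pi (delta (lam j) (ang j)) pi)) \<and>
      (impossible lam Phi ang (outc i j 0 1 c) \<longrightarrow>
         (impossible lam Phi ang (outc i j 1 0 c) \<longleftrightarrow>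
            cong2pi (delta (lam i) (ang i)) (delta (lam j) (ang j)))) \<and>
      (impossible lam Phi ang (outc i j 1 0 c) \<longrightarrow>
         (impossible lam Phi ang (outc i j 0 1 c) \<longleftrightarrow>
            cong2pi (delta (lam i) (ang i)) (delta (lam j) (ang j)))))"
    unfolding di_def[symmetric] dj_def[symmetric] E00 E11 E01 E10
  proof (intro conjI impI)
    assume h: "(Ai0*Aj0)*X + e*((Bi0*Bj0)*Y) = 0"
    show "(Ai1*Aj1)*X + e*((Bi1*Bj1)*Y) = 0 \<longleftrightarrow> cong2pi di pi \<and> cong2pi dj pi"
      unfolding L1[OF h nzP(1) e0 conjunct2[OF qk]] W1[symmetric]
      using LL qi qj by blast
  next
    assume h: "(Ai1*Aj1)*X + e*((Bi1*Bj1)*Y) = 0"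
    show "(Ai0*Aj0)*X + e*((Bi0*Bj0)*Y) = 0 \<longleftrightarrow> cong2pi di pi \<and> cong2pi dj pi"
      unfolding L1[OF h nzP(2) e0 conjunct2[OF qk]] W1[symmetric]
      using LL qi qj by blast
  next
    assume h: "(Ai0*Aj1)*X + e*((Bi0*Bj1)*Y) = 0"
    show "(Ai1*Aj0)*X + e*((Bi1*Bj0)*Y) = 0 \<longleftrightarrow> cong2pi di dj"
      unfolding L1[OF h nzP(3) e0 conjunct2[OF qk]] W2[symmetric]
      using LL qi qj by blast
  next
    assume h: "(Ai1*Aj0)*X + e*((Bi1*Bj0)*Y) = 0"
    show "(Ai0*Aj1)*X + e*((Bi0*Bj1)*Y) = 0 \<longleftrightarrow> cong2pi di dj"
      unfolding L1[OF h nzP(4) e0 conjunct2[OF qk]] W2[symmetric]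
      using LL qi qj by blast
  qed
qed

end
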